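(* Let $0<c_1\le c_2$ be constants, let $n$ be sufficiently large, let $t\in[1,n^{0.1}]$, and let $H$ be an undirected graph on $n$ vertices in which every vertex has degree between $c_1t$ and $c_2t$ and which has no cycle of length at most $8$. For all constants $a,b>0$ there is a constant $K$ (depending only on $a,b,c_1,c_2$) such that for every vertex set $C$ with $|C|\le at$, the number of distinct maximal cliques $D$ of $H^2$ with $|C\cap D|\ge bt$ is at most $K$.
   Context: $H^2$ (the square of $H$) is the graph on the vertex set of $H$ in which $u\neq v$ are adjacent if and only if there is a path of length exactly $2$ between $u$ and $v$ in $H$. A set $C$ is said to cover a maximal clique $D$ of $H^2$ if $|C\cap D|=\Omega(t)$. *)

theory Defs
  imports Complex_Main
begin

definition simple_graph :: "'a set \<Rightarrow> ('a \<Rightarrow> 'a \<Rightarrow> bool) \<Rightarrow> bool" where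
  "simple_graph V E \<longleftrightarrow> finite V \<and> (\<forall>u v. E u v \<longrightarrow> u \<in> V \<and> v \<in> V)
     \<and> (\<forall>u v. E u v \<longrightarrow> E v u) \<and> (\<forall>v. \<not> E v v)"

definition degree :: "'a set \<Rightarrow> ('a \<Rightarrow> 'a \<Rightarrow> bool) \<Rightarrow> 'a \<Rightarrow> nat" where
  "degree V E v = card {u \<in> V. E v u}"

definition has_cycle_of_length :: "'a set \<Rightarrow> ('a \<Rightarrow> 'a \<Rightarrow> bool) \<Rightarrow> nat \<Rightarrow> bool" where
  "has_cycle_of_length V E k \<longleftrightarrow> 3 \<le> k \<and> (\<exists>xs. length xs = k \<and> distinct xs \<and> set xs \<subseteq> V
      \<and> (\<forall>i<k. E (xs ! i) (xs ! ((i + 1) mod k))))"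

definition graph_square :: "('a \<Rightarrow> 'a \<Rightarrow> bool) \<Rightarrow> 'a \<Rightarrow> 'a \<Rightarrow> bool" where
  "graph_square E u v \<longleftrightarrow> u \<noteq> v \<and> (\<exists>w. E u w \<and> E w v)"

definition is_clique :: "'a set \<Rightarrow> ('a \<Rightarrow> 'a \<Rightarrow> bool) \<Rightarrow> 'a set \<Rightarrow> bool" where
  "is_clique V E D \<longleftrightarrow> D \<subseteq> V \<and> (\<forall>u\<in>D. \<forall>v\<in>D. u \<noteq> v \<longrightarrow> E u v)"

definition is_maximal_clique :: "'a set \<Rightarrow> ('a \<Rightarrow> 'a \<Rightarrow> bool) \<Rightarrow> 'a set \<Rightarrow> bool" where
  "is_maximal_clique V E D \<longleftrightarrow> is_clique V E D \<and>
     (\<forall>D'. is_clique V E D' \<and> D \<subseteq> D' \<longrightarrow> D' = D)"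

end

theory Submission
  imports Defs
begin

definition Nb :: "'a set \<Rightarrow> ('a \<Rightarrow> 'a \<Rightarrow> bool) \<Rightarrow> 'a \<Rightarrow> 'a set" where
  "Nb V E w = {u \<in> V. E w u}"

lemma cyc3:
  assumes "E a b" "E b c" "E c a" "distinct [a,b,c]" "{a,b,c} \<subseteq> V"
  shows "has_cycle_of_length V E 3"
proof -
  have "\<forall>i<3. E ([a,b,c] ! i) ([a,b,c] ! ((i + 1) mod 3))"
  proof (intro allI impI)
    fix i :: nat assume "i < 3"
    then have "i = 0 \<or> i = 1 \<or> i = 2" by auto
    then show "E ([a,b,c] ! i) ([a,b,c] ! ((i + 1) mod 3))" using assms by auto
  qed
  then show ?thesis unfolding has_cycle_of_length_def using assms
    by (intro conjI exI[of _ "[a,b,c]"]) auto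
qed

lemma cyc4:
  assumes "E a b" "E b c" "E c d" "E d a" "distinct [a,b,c,d]" "{a,b,c,d} \<subseteq> V"
  shows "has_cycle_of_length V E 4"
proof -
  have "\<forall>i<4. E ([a,b,c,d] ! i) ([a,b,c,d] ! ((i + 1) mod 4))"
  proof (intro allI impI)
    fix i :: nat assume "i < 4"
    then have "i = 0 \<or> i = 1 \<or> i = 2 \<or> i = 3" by auto
    then show "E ([a,b,c,d] ! i) ([a,b,c,d] ! ((i + 1) mod 4))" using assms by auto
  qed
  then show ?thesis unfolding has_cycle_of_length_def using assms
    by (intro conjI exI[of _ "[a,b,c,d]"]) auto
qed

lemma cyc6:
  assumes "E a b" "E b c" "E c d" "E d e" "E e f" "E f a" "distinct [a,b,c,d,e,f]"
    "{a,b,c,d,e,f} \<subseteq> V"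
  shows "has_cycle_of_length V E 6"
proof -
  have "\<forall>i<6. E ([a,b,c,d,e,f] ! i) ([a,b,c,d,e,f] ! ((i + 1) mod 6))"
  proof (intro allI impI)
    fix i :: nat assume "i < 6"
    then have "i = 0 \<or> i = 1 \<or> i = 2 \<or> i = 3 \<or> i = 4 \<or> i = 5" by auto
    then show "E ([a,b,c,d,e,f] ! i) ([a,b,c,d,e,f] ! ((i + 1) mod 6))" using assms by auto
  qed
  then show ?thesis unfolding has_cycle_of_length_def using assms
    by (intro conjI exI[of _ "[a,b,c,d,e,f]"]) auto
qed

lemma Nb_clique:
  assumes "simple_graph V E"
  shows "is_clique V (graph_square E) (Nb V E w)"
  using assms unfolding is_clique_def Nb_def graph_square_def simple_graph_def by blast

lemma max_clique_Nb:
  assumes g: "simple_graph V E" and nc: "\<forall>k\<le>8. \<not> has_cycle_of_length V E k"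
    and D: "is_maximal_clique V (graph_square E) D" and xy: "x \<in> D" "y \<in> D" "x \<noteq> y"
  shows "\<exists>w\<in>V. D = Nb V E w"
proof -
  have sym: "\<And>u v. E u v \<Longrightarrow> E v u" and irr: "\<And>v. \<not> E v v"
    and inV: "\<And>u v. E u v \<Longrightarrow> u \<in> V \<and> v \<in> V"
    using g unfolding simple_graph_def by blast+
  have n3: "\<not> has_cycle_of_length V E 3" and n4: "\<not> has_cycle_of_length V E 4"
    and n6: "\<not> has_cycle_of_length V E 6" using nc by auto
  have cl: "is_clique V (graph_square E) D" using D unfolding is_maximal_clique_def by blast
  have sq: "\<And>u v. u \<in> D \<Longrightarrow> v \<in> D \<Longrightarrow> u \<noteq> v \<Longrightarrow> \<exists>m. E u m \<and> E m v"
    using cl unfolding is_clique_def graph_square_def by blast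
  obtain w where xw: "E x w" and wy: "E w y" using sq xy by blast
  have wV: "w \<in> V" using inV xw by blast
  have sub: "D \<subseteq> Nb V E w"
  proof
    fix z assume zD: "z \<in> D"
    have "E w z"
    proof (cases "z = x \<or> z = y")
      case True then show ?thesis using xw wy sym by blast
    next
      case False
      then have zx: "z \<noteq> x" and zy: "z \<noteq> y" by auto
      obtain p where xp: "E x p" and pz: "E p z" using sq[OF xy(1) zD] zx by metis
      obtain q where yq: "E y q" and qz: "E q z" using sq[OF xy(2) zD] zy by metis
      show ?thesis
      proof (rule ccontr)
        assume nwz: "\<not> E w z"
        have wq: "w \<noteq> q" using nwz qz by blast
        have wp: "w \<noteq> p" using nwz pz by blast
        have wz: "w \<noteq> z"
        proof
          assume "w = z"
          then have "has_cycle_of_length V E 3"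
            using cyc3[of E x p z V] xp pz xw zx irr inV sym by (metis distinct_length_2_or_more distinct_singleton empty_subsetI insert_subset list.set(1) list.set(2) set_ConsD)
          then show False using n3 by blast
        qed
        have py: "p \<noteq> y"
        proof
          assume "p = y"
          then have "has_cycle_of_length V E 3"
            using cyc3[of E x w y V] xp xw wy xy irr inV sym by auto
          then show False using n3 by blast
        qed
        have qx: "q \<noteq> x"
        proof
          assume "q = x"
          then have "has_cycle_of_length V E 3"
            using cyc3[of E x w y V] yq xw wy xy irr inV sym by auto
          then show False using n3 by blast
        qed
        show False
        proof (cases "p = q")
          case True
          then have "has_cycle_of_length V E 4"
            using cyc4[of E x w y p V] xw wy yq xp sym irr inV xy wp py by auto
          then show False using n4 by blast
        next
          case False
          then have "has_cycle_of_length V E 6"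
            using cyc6[of E x w y q z p V] xw wy yq qz pz xp sym irr inV xy wp wq wz py qx zx zy
            by auto
          then show False using n6 by blast
        qed
      qed
    qed
    moreover have "z \<in> V" using zD cl unfolding is_clique_def by blast
    ultimately show "z \<in> Nb V E w" unfolding Nb_def by blast
  qed
  have "Nb V E w = D" using D sub Nb_clique[OF g] unfolding is_maximal_clique_def by blast
  then show ?thesis using wV by blast
qed

lemma Nb_inter:
  assumes g: "simple_graph V E" and nc: "\<forall>k\<le>8. \<not> has_cycle_of_length V E k"
    and "v \<noteq> w" "v \<in> V" "w \<in> V"
  shows "card (Nb V E v \<inter> Nb V E w) \<le> 1"
proof -
  have sym: "\<And>u v. E u v \<Longrightarrow> E v u" and irr: "\<And>v. \<not> E v v"
    and inV: "\<And>u v. E u v \<Longrightarrow> u \<in> V \<and> v \<in> V" and fin: "finite V"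
    using g unfolding simple_graph_def by blast+
  have n4: "\<not> has_cycle_of_length V E 4" using nc by auto
  have "\<forall>u1\<in>Nb V E v \<inter> Nb V E w. \<forall>u2\<in>Nb V E v \<inter> Nb V E w. u1 = u2"
  proof (intro ballI, rule ccontr)
    fix u1 u2 assume u1: "u1 \<in> Nb V E v \<inter> Nb V E w" and u2: "u2 \<in> Nb V E v \<inter> Nb V E w"
      and ne: "u1 \<noteq> u2"
    have "has_cycle_of_length V E 4"
      using cyc4[of E v u1 w u2 V] u1 u2 ne assms(3) sym irr inV unfolding Nb_def by auto
    then show False using n4 by blast
  qed
  moreover have "finite (Nb V E v \<inter> Nb V E w)" using fin unfolding Nb_def by auto
  ultimately show ?thesis using card_le_Suc0_iff_eq by (metis One_nat_def)
qed

lemma aux_ineq: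
  fixes aw u c x s :: real
  assumes "aw + u \<le> c + x" "s * c - c * (c - 1) / 2 \<le> u" "s \<le> aw"
  shows "(c + 1) * s - (c + 1) * ((c + 1) - 1) / 2 \<le> x"
proof -
  have "(c + 1) * s - (c + 1) * ((c + 1) - 1) / 2 = s + (s * c - c * (c - 1) / 2) - c"
    by (simp add: algebra_simps add_divide_distrib diff_divide_distrib)
  then show ?thesis using assms by linarith
qed

lemma union_bound:
  fixes A :: "'b \<Rightarrow> 'a set" and s :: real
  assumes "finite S" "\<forall>w\<in>S. finite (A w) \<and> s \<le> real (card (A w))"
    "\<forall>v\<in>S. \<forall>w\<in>S. v \<noteq> w \<longrightarrow> card (A v \<inter> A w) \<le> 1"
  shows "real (card S) * s - real (card S) * (real (card S) - 1) / 2 \<le> real (card (\<Union>(A ` S)))"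
  using assms
proof (induction S rule: finite_induct)
  case empty then show ?case by simp
next
  case (insert w S)
  let ?U = "\<Union>(A ` S)"
  have IH: "real (card S) * s - real (card S) * (real (card S) - 1) / 2 \<le> real (card ?U)"
    using insert by auto
  have fU: "finite ?U" using insert by auto
  have fw: "finite (A w)" and sw: "s \<le> real (card (A w))" using insert by auto
  have eq: "card (A w) + card ?U = card (A w \<union> ?U) + card (A w \<inter> ?U)"
    using card_Un_Int[OF fw fU] .
  have "A w \<inter> ?U = (\<Union>v\<in>S. A w \<inter> A v)" by blast
  then have "card (A w \<inter> ?U) \<le> (\<Sum>v\<in>S. card (A w \<inter> A v))"
    using card_UN_le[OF insert(1), of "\<lambda>v. A w \<inter> A v"] by simp
  also have "\<dots> \<le> (\<Sum>v\<in>S. 1)"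
    using insert(2,5) by (intro sum_mono) (metis insert_iff)
  finally have "card (A w \<inter> ?U) \<le> card S" by simp
  then have "real (card (A w \<union> ?U)) \<ge> real (card (A w)) + real (card ?U) - real (card S)"
    using eq by linarith
  moreover have "card (insert w S) = Suc (card S)" using insert by simp
  moreover have "\<Union>(A ` insert w S) = A w \<union> ?U" by simp
  moreover have "(real (card S) + 1) * s - (real (card S) + 1) * ((real (card S) + 1) - 1) / 2
     \<le> real (card (A w \<union> ?U))"
    by (rule aux_ineq[of "real (card (A w))" "real (card ?U)"]) (use calculation IH sw in \<open>auto simp: mult.commute\<close>)
  ultimately show ?case by (simp add: add.commute)
qed

lemma W_bound:
  fixes t a b c2 :: real and C V :: "'a set"
  assumes g: "simple_graph V E" and nc: "\<forall>k\<le>8. \<not> has_cycle_of_length V E k"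
    and t1: "1 \<le> t" and a: "0 < a" and b: "0 < b" and c2: "0 \<le> c2"
    and deg: "\<forall>v\<in>V. real (degree V E v) \<le> c2 * t"
    and CV: "C \<subseteq> V" and Ca: "real (card C) \<le> a * t"
    and M: "real M * b \<ge> a + 1" "1 \<le> M"
  shows "real (card {w \<in> V. b * t \<le> real (card (C \<inter> Nb V E w))})
          \<le> real M + a * c2 * (real M ^ 2) ^ 2"
proof -
  let ?W = "{w \<in> V. b * t \<le> real (card (C \<inter> Nb V E w))}"
  have sym: "\<And>u v. E u v \<Longrightarrow> E v u" and fin: "finite V"
    using g unfolding simple_graph_def by blast+
  have finW: "finite ?W" using fin by auto
  have finC: "finite C" using CV fin finite_subset by blast
  show ?thesis
  proof (cases "t \<le> real M ^ 2")
    case True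
    have "?W \<subseteq> (\<Union>c\<in>C. Nb V E c)"
    proof
      fix w assume w: "w \<in> ?W"
      then have "b * t > 0" using b t1 by auto
      then have "card (C \<inter> Nb V E w) \<noteq> 0" using w by auto
      then have "C \<inter> Nb V E w \<noteq> {}" by (metis card.empty)
      then obtain c where "c \<in> C" "c \<in> Nb V E w" by blast
      then show "w \<in> (\<Union>c\<in>C. Nb V E c)" using w sym unfolding Nb_def by auto
    qed
    then have "card ?W \<le> card (\<Union>c\<in>C. Nb V E c)"
      by (intro card_mono) (use fin finC in \<open>auto simp: Nb_def\<close>)
    also have "\<dots> \<le> (\<Sum>c\<in>C. card (Nb V E c))" by (rule card_UN_le[OF finC])
    finally have "real (card ?W) \<le> (\<Sum>c\<in>C. real (card (Nb V E c)))"
      by (metis of_nat_le_iff of_nat_sum)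
    also have "\<dots> \<le> (\<Sum>c\<in>C. c2 * t)"
      using deg CV by (intro sum_mono) (auto simp: Nb_def degree_def)
    also have "\<dots> = real (card C) * (c2 * t)" by simp
    also have "\<dots> \<le> (a * t) * (c2 * t)"
      using Ca c2 t1 by (intro mult_right_mono) auto
    also have "\<dots> = a * c2 * (t * t)" by (simp add: algebra_simps)
    also have "\<dots> \<le> a * c2 * (real M ^ 2 * real M ^ 2)"
      using a c2 t1 True by (intro mult_left_mono mult_mono) auto
    finally have "real (card ?W) \<le> a * c2 * (real M ^ 2 * real M ^ 2)" .
    moreover have "(real M ^ 2) ^ 2 = real M ^ 2 * real M ^ 2" by (simp add: power2_eq_square)
    ultimately show ?thesis by simp
  next
    case False
    show ?thesis
    proof (rule ccontr)
      assume "\<not> ?thesis"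
      moreover have "0 \<le> a * c2 * (real M ^ 2) ^ 2" using a c2 by simp
      ultimately have "real M \<le> real (card ?W)" by linarith
      then have "M \<le> card ?W" by simp
      then obtain S where S: "S \<subseteq> ?W" "card S = M" by (meson obtain_subset_with_card_n)
      have finS: "finite S" using S finW finite_subset by blast
      have "real (card S) * (b * t) - real (card S) * (real (card S) - 1) / 2
          \<le> real (card (\<Union>((\<lambda>w. C \<inter> Nb V E w) ` S)))"
      proof (rule union_bound[OF finS])
        show "\<forall>w\<in>S. finite (C \<inter> Nb V E w) \<and> b * t \<le> real (card (C \<inter> Nb V E w))"
          using S finC by auto
        show "\<forall>v\<in>S. \<forall>w\<in>S. v \<noteq> w \<longrightarrow> card ((C \<inter> Nb V E v) \<inter> (C \<inter> Nb V E w)) \<le> 1"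
        proof (intro ballI impI)
          fix v w assume "v \<in> S" "w \<in> S" "v \<noteq> w"
          then have "card (Nb V E v \<inter> Nb V E w) \<le> 1" using Nb_inter[OF g nc] S by auto
          moreover have "card ((C \<inter> Nb V E v) \<inter> (C \<inter> Nb V E w)) \<le> card (Nb V E v \<inter> Nb V E w)"
            by (intro card_mono) (use fin in \<open>auto simp: Nb_def\<close>)
          ultimately show "card ((C \<inter> Nb V E v) \<inter> (C \<inter> Nb V E w)) \<le> 1" by linarith
        qed
      qed
      also have "\<dots> \<le> real (card C)"
        by (subst of_nat_le_iff, intro card_mono[OF finC]) auto
      finally have h: "real M * (b * t) - real M * (real M - 1) / 2 \<le> a * t"
        using Ca S by simp
      have "t * 1 \<le> t * (real M * b - a)" using M t1 by (intro mult_left_mono) auto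
      moreover have "t * (real M * b - a) = real M * (b * t) - a * t" by (simp add: algebra_simps)
      ultimately have "t \<le> real M * (real M - 1) / 2" using h by linarith
      also have "\<dots> \<le> real M ^ 2" using M by (simp add: power2_eq_square field_simps)
      finally show False using False by simp
    qed
  qed
qed


theorem lemmaA7:
  fixes c1 c2 a b :: real
  assumes "0 < c1" "c1 \<le> c2" "0 < a" "0 < b"
  shows "\<exists>K::real. \<exists>N::nat. \<forall>n \<ge> N. \<forall>(t::real) (V::nat set) (E::nat \<Rightarrow> nat \<Rightarrow> bool) (C::nat set).
      1 \<le> t \<and> t \<le> real n powr 0.1 \<and>
      simple_graph V E \<and> card V = n \<and>
      (\<forall>v\<in>V. c1 * t \<le> real (degree V E v) \<and> real (degree V E v) \<le> c2 * t) \<and>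
      (\<forall>k\<le>8. \<not> has_cycle_of_length V E k) \<and>
      C \<subseteq> V \<and> real (card C) \<le> a * t
      \<longrightarrow> real (card {D. is_maximal_clique V (graph_square E) D \<and> b * t \<le> real (card (C \<inter> D))}) \<le> K"
proof -
  define M where "M = nat \<lceil>(a + 1) / b\<rceil>"
  have Mge: "real M \<ge> (a + 1) / b" unfolding M_def by linarith
  then have Mb: "real M * b \<ge> a + 1" using assms(4) by (simp add: field_simps)
  have M1: "1 \<le> M" using Mb assms(3,4)
    by (metis Mge add_pos_pos divide_pos_pos less_one linorder_not_le of_nat_0 order.strict_trans2 zero_less_one)
  have c2: "0 \<le> c2" using assms by linarith
  show ?thesis
  proof (intro exI[of _ "a / b + (real M + a * c2 * (real M ^ 2) ^ 2)"] exI[of _ 0] allI impI)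
    fix n :: nat and t :: real and V :: "nat set" and E :: "nat \<Rightarrow> nat \<Rightarrow> bool" and C :: "nat set"
    assume h: "1 \<le> t \<and> t \<le> real n powr 0.1 \<and>
      simple_graph V E \<and> card V = n \<and>
      (\<forall>v\<in>V. c1 * t \<le> real (degree V E v) \<and> real (degree V E v) \<le> c2 * t) \<and>
      (\<forall>k\<le>8. \<not> has_cycle_of_length V E k) \<and>
      C \<subseteq> V \<and> real (card C) \<le> a * t"
    then have t1: "1 \<le> t" and g: "simple_graph V E" and nc: "\<forall>k\<le>8. \<not> has_cycle_of_length V E k"
      and deg: "\<forall>v\<in>V. real (degree V E v) \<le> c2 * t" and CV: "C \<subseteq> V"
      and Ca: "real (card C) \<le> a * t" by auto
    have fin: "finite V" using g unfolding simple_graph_def by blast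
    have finC: "finite C" using CV fin finite_subset by blast
    let ?Q = "{D. is_maximal_clique V (graph_square E) D \<and> b * t \<le> real (card (C \<inter> D))}"
    let ?W = "{w \<in> V. b * t \<le> real (card (C \<inter> Nb V E w))}"
    let ?S = "{x \<in> C. b * t \<le> 1}"
    have bt: "0 < b * t" using assms(4) t1 by simp
    have sub: "?Q \<subseteq> (\<lambda>x. {x}) ` ?S \<union> Nb V E ` ?W"
    proof
      fix D assume D: "D \<in> ?Q"
      then have mc: "is_maximal_clique V (graph_square E) D" and cD: "b * t \<le> real (card (C \<inter> D))"
        by auto
      have DV: "D \<subseteq> V" using mc unfolding is_maximal_clique_def is_clique_def by blast
      have "card (C \<inter> D) \<noteq> 0" using cD bt by linarith
      then obtain x where x: "x \<in> C" "x \<in> D" by (metis card.empty disjoint_iff)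
      show "D \<in> (\<lambda>x. {x}) ` ?S \<union> Nb V E ` ?W"
      proof (cases "\<exists>y\<in>D. y \<noteq> x")
        case True
        then obtain y where "y \<in> D" "y \<noteq> x" by blast
        then obtain w where w: "w \<in> V" "D = Nb V E w" using max_clique_Nb[OF g nc mc x(2)] by metis
        then have "w \<in> ?W" using cD by auto
        then show ?thesis using w by blast
      next
        case False
        then have Dx: "D = {x}" using x by blast
        then have "card (C \<inter> D) \<le> 1" by (metis card_mono finite.emptyI finite_insert inf_le2 is_singletonI is_singleton_altdef)
        then have "b * t \<le> 1" using cD by linarith
        then show ?thesis using Dx x by blast
      qed
    qed
    have finS: "finite ?S" using finC by auto
    have finW: "finite ?W" using fin by auto
    have "card ?Q \<le> card ((\<lambda>x. {x}) ` ?S \<union> Nb V E ` ?W)"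
      by (rule card_mono[OF _ sub]) (use finS finW in auto)
    also have "\<dots> \<le> card ((\<lambda>x. {x}) ` ?S) + card (Nb V E ` ?W)" by (rule card_Un_le)
    also have "\<dots> \<le> card ?S + card ?W" by (intro add_mono card_image_le finS finW)
    finally have cQ: "real (card ?Q) \<le> real (card ?S) + real (card ?W)" by linarith
    have cS: "real (card ?S) \<le> a / b"
    proof (cases "b * t \<le> 1")
      case True
      then have "?S = C" by auto
      then have "real (card ?S) \<le> a * t" using Ca by simp
      also have "\<dots> \<le> a / b" using True assms(3,4) by (simp add: field_simps mult_left_mono)
      finally show ?thesis .
    next
      case False
      then have "card ?S = 0" by auto
      moreover have "0 \<le> a / b" using assms(3,4) by simp
      ultimately show ?thesis by simp
    qed
    have cW: "real (card ?W) \<le> real M + a * c2 * (real M ^ 2) ^ 2"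
      by (rule W_bound[OF g nc t1 assms(3,4) c2 deg CV Ca Mb M1])
    show "real (card ?Q) \<le> a / b + (real M + a * c2 * (real M ^ 2) ^ 2)"
      using cQ cS cW by linarith
  qed
qed

end
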